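(* Let $\delta>0$ and let $A$ be a deterministic priority mechanism that processes bidders and is truthful without money and with verification for CAs with known $2$-minded bidders. Then the approximation ratio of $A$ on instances with $m$ goods is greater than $(1-\delta)m/2$.
   Context: Combinatorial auction with a set $\mathsf U$ of $m$ goods (single copy each) and bidders; bidder $i$ has a public collection $\mathcal S_i$ of $2$ nonempty subsets of $\mathsf U$ (known $2$-minded bidders) and a private valuation $v_i:\mathcal S_i\to\mathbb R_{\ge0}$, extended to all subsets $T$ by $v_i(T)=\max\{v_i(S'):S'\in\mathcal S_i,S'\subseteq T\}$ ($0$ if none). Truthfulness without money and with verification (known bidders) means: for all $i$, $\mathbf b_{-i}$, true $v_i$ and declarations $b_i$ with $b_i(A_i(b_i,\mathbf b_{-i}))\le v_i(A_i(b_i,\mathbf b_{-i}))$, $v_i(A_i(v_i,\mathbf b_{-i}))\ge v_i(A_i(b_i,\mathbf b_{-i}))$. Priority mechanism processing bidders: the input is a finite set $I$ of items $(i,v_i)$ (a bidder together with her declared valuation function), drawn from the class $\mathcal I$ of all such items. The mechanism proceeds in rounds; in each round, without looking at the unprocessed items, it chooses a total order on $\mathcal I$ (possibly depending on items processed and decisions made so far), receives the first unprocessed item $(i,v_i)$ of $I$ in this order, and irrevocably decides a (possibly empty) set $S$ allocated to $i$, collecting welfare $v_i(S)$. The output must be feasible (allocated sets pairwise disjoint). Approximation ratio $\alpha$: welfare $\ge\mathrm{OPT}/\alpha$ on every input, $\mathrm{OPT}$ being the maximum welfare of a feasible allocation. *)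

theory Defs
  imports Main "HOL-Library.Extended_Real"
begin

(* Goods have type 'g; the set of goods is U.
   A bidder is a pair (name, public collection S_i); the class of all bidders
   is thus as rich as possible (every collection, infinitely many copies). *)
type_synonym 'g bidder = "nat \<times> 'g set set"
type_synonym 'g valuation = "'g set \<Rightarrow> real"
type_synonym 'g item = "'g bidder \<times> 'g valuation"
type_synonym 'g history = "('g item \<times> 'g set) list"

definition coll :: "'g bidder \<Rightarrow> 'g set set" where
  "coll i = snd i"

definition valid_bidder :: "'g set \<Rightarrow> 'g bidder \<Rightarrow> bool" where
  "valid_bidder U i \<longleftrightarrow> coll i \<subseteq> Pow U \<and> {} \<notin> coll i \<and> card (coll i) = 2"

(* a valuation S_i -> R_{>=0}, represented as a function that is 0 outside S_i *)
definition valid_val :: "'g bidder \<Rightarrow> 'g valuation \<Rightarrow> bool" where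
  "valid_val i v \<longleftrightarrow> (\<forall>S\<in>coll i. 0 \<le> v S) \<and> (\<forall>S. S \<notin> coll i \<longrightarrow> v S = 0)"

definition ext_val :: "'g bidder \<Rightarrow> 'g valuation \<Rightarrow> 'g set \<Rightarrow> real" where
  "ext_val i v T = (if {S\<in>coll i. S \<subseteq> T} = {} then 0
                    else Max (v ` {S\<in>coll i. S \<subseteq> T}))"

definition Items :: "'g set \<Rightarrow> 'g item set" where
  "Items U = {(i, v). valid_bidder U i \<and> valid_val i v}"

definition valid_input :: "'g set \<Rightarrow> 'g item set \<Rightarrow> bool" where
  "valid_input U I \<longleftrightarrow> finite I \<and> I \<subseteq> Items U \<and>
     (\<forall>x\<in>I. \<forall>y\<in>I. fst x = fst y \<longrightarrow> x = y)"

(* Priority mechanism: ord h is the total order on \<I> chosen after history h,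
   dec h x is the set irrevocably allocated to the received item x. *)
definition priority_orders :: "'g set \<Rightarrow> ('g history \<Rightarrow> ('g item \<times> 'g item) set) \<Rightarrow> bool" where
  "priority_orders U ord \<longleftrightarrow> (\<forall>h. linear_order_on (Items U) (ord h))"

definition first_in :: "('a \<times> 'a) set \<Rightarrow> 'a set \<Rightarrow> 'a" where
  "first_in r R = (THE x. x \<in> R \<and> (\<forall>y\<in>R. (x, y) \<in> r))"

fun hist :: "('g history \<Rightarrow> ('g item \<times> 'g item) set) \<Rightarrow> ('g history \<Rightarrow> 'g item \<Rightarrow> 'g set)
             \<Rightarrow> 'g item set \<Rightarrow> nat \<Rightarrow> 'g history" where
  "hist ord dec I 0 = []"
| "hist ord dec I (Suc k) =
     (let h = hist ord dec I k; R = I - fst ` set h in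
      if R = {} then h else (let x = first_in (ord h) R in h @ [(x, dec h x)]))"

definition run :: "('g history \<Rightarrow> ('g item \<times> 'g item) set) \<Rightarrow> ('g history \<Rightarrow> 'g item \<Rightarrow> 'g set)
             \<Rightarrow> 'g item set \<Rightarrow> 'g history" where
  "run ord dec I = hist ord dec I (card I)"

definition alloc :: "('g history \<Rightarrow> ('g item \<times> 'g item) set) \<Rightarrow> ('g history \<Rightarrow> 'g item \<Rightarrow> 'g set)
             \<Rightarrow> 'g item set \<Rightarrow> 'g bidder \<Rightarrow> 'g set" where
  "alloc ord dec I i = \<Union>{S. \<exists>v. ((i, v), S) \<in> set (run ord dec I)}"

definition feasible_alloc :: "'g set \<Rightarrow> 'g item set \<Rightarrow> ('g bidder \<Rightarrow> 'g set) \<Rightarrow> bool" where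
  "feasible_alloc U I f \<longleftrightarrow> (\<forall>x\<in>I. f (fst x) \<subseteq> U) \<and>
     (\<forall>x\<in>I. \<forall>y\<in>I. fst x \<noteq> fst y \<longrightarrow> f (fst x) \<inter> f (fst y) = {})"

definition welfare_of :: "'g item set \<Rightarrow> ('g bidder \<Rightarrow> 'g set) \<Rightarrow> real" where
  "welfare_of I f = (\<Sum>x\<in>I. ext_val (fst x) (snd x) (f (fst x)))"

definition OPT :: "'g set \<Rightarrow> 'g item set \<Rightarrow> real" where
  "OPT U I = Max {welfare_of I f | f. feasible_alloc U I f}"

definition mech_feasible :: "'g set \<Rightarrow> ('g history \<Rightarrow> ('g item \<times> 'g item) set)
     \<Rightarrow> ('g history \<Rightarrow> 'g item \<Rightarrow> 'g set) \<Rightarrow> bool" where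
  "mech_feasible U ord dec \<longleftrightarrow>
     (\<forall>I. valid_input U I \<longrightarrow> feasible_alloc U I (alloc ord dec I))"

definition truthful_verif :: "'g set \<Rightarrow> ('g history \<Rightarrow> ('g item \<times> 'g item) set)
     \<Rightarrow> ('g history \<Rightarrow> 'g item \<Rightarrow> 'g set) \<Rightarrow> bool" where
  "truthful_verif U ord dec \<longleftrightarrow>
     (\<forall>I i v b. valid_input U I \<longrightarrow> valid_bidder U i \<longrightarrow> i \<notin> fst ` I \<longrightarrow>
        valid_val i v \<longrightarrow> valid_val i b \<longrightarrow>
        (let Ab = alloc ord dec (insert (i, b) I) i;
             Av = alloc ord dec (insert (i, v) I) i in
         ext_val i b Ab \<le> ext_val i v Ab \<longrightarrow> ext_val i v Ab \<le> ext_val i v Av))"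

definition is_approx :: "'g set \<Rightarrow> ('g history \<Rightarrow> ('g item \<times> 'g item) set)
     \<Rightarrow> ('g history \<Rightarrow> 'g item \<Rightarrow> 'g set) \<Rightarrow> real \<Rightarrow> bool" where
  "is_approx U ord dec \<alpha> \<longleftrightarrow>
     (\<forall>I. valid_input U I \<longrightarrow> OPT U I / \<alpha> \<le> welfare_of I (alloc ord dec I))"

(* the approximation ratio: infimum of all (positive) alpha for which A is an
   alpha-approximation; infinity if there is none *)
definition approx_ratio :: "'g set \<Rightarrow> ('g history \<Rightarrow> ('g item \<times> 'g item) set)
     \<Rightarrow> ('g history \<Rightarrow> 'g item \<Rightarrow> 'g set) \<Rightarrow> ereal" where
  "approx_ratio U ord dec = Inf {ereal \<alpha> | \<alpha>. \<alpha> > 0 \<and> is_approx U ord dec \<alpha>}"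

end

theory Submission
  imports Defs "HOL-Library.FuncSet"
begin

lemma lin_min_ex:
  assumes lin: "linear_order_on A r" and fin: "finite R" and ne: "R \<noteq> {}" and sub: "R \<subseteq> A"
  shows "\<exists>x\<in>R. \<forall>y\<in>R. (x, y) \<in> r"
  using fin ne sub
proof (induction R rule: finite_ne_induct)
  case (singleton x)
  then show ?case using lin
    by (auto simp: linear_order_on_def partial_order_on_def preorder_on_def refl_on_def)
next
  case (insert a R)
  then obtain x where x: "x \<in> R" "\<forall>y\<in>R. (x, y) \<in> r" by auto
  have aA: "a \<in> A" and xA: "x \<in> A" using insert x by auto
  have tr: "trans r" using lin by (auto simp: linear_order_on_def partial_order_on_def preorder_on_def)
  have rf: "(a,a) \<in> r" using lin aA by (auto simp: linear_order_on_def partial_order_on_def preorder_on_def refl_on_def)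
  show ?case
  proof (cases "(a, x) \<in> r")
    case True
    then have "\<forall>y\<in>insert a R. (a, y) \<in> r" using x tr rf by (auto dest: transD)
    then show ?thesis by auto
  next
    case False
    then have "a \<noteq> x" using rf by auto
    then have "(x, a) \<in> r" using False lin aA xA by (auto simp: linear_order_on_def total_on_def)
    then show ?thesis using x by auto
  qed
qed

lemma first_in_mem:
  assumes lin: "linear_order_on A r" and fin: "finite R" and ne: "R \<noteq> {}" and sub: "R \<subseteq> A"
  shows "first_in r R \<in> R"
proof -
  obtain x where x: "x \<in> R" "\<forall>y\<in>R. (x, y) \<in> r" using lin_min_ex[OF assms] by blast
  have as: "antisym r" using lin by (auto simp: linear_order_on_def partial_order_on_def)
  have "x \<in> R \<and> (\<forall>y\<in>R. (x, y) \<in> r)" using x by auto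
  moreover have "\<And>z. z \<in> R \<and> (\<forall>y\<in>R. (z, y) \<in> r) \<Longrightarrow> z = x"
    using x as by (auto dest: antisymD)
  ultimately have "(THE z. z \<in> R \<and> (\<forall>y\<in>R. (z, y) \<in> r)) = x" by (rule the_equality)
  then show ?thesis unfolding first_in_def using x by simp
qed

lemma hist_step: "set (hist ord dec I k) \<subseteq> set (hist ord dec I (Suc k))"
  by (auto simp: Let_def)

lemma hist_mono: "k \<le> n \<Longrightarrow> set (hist ord dec I k) \<subseteq> set (hist ord dec I n)"
proof (induction n rule: dec_induct)
  case base then show ?case by simp
next
  case (step n) then show ?case using hist_step by blast
qed

lemma first_in_run:
  assumes "finite I" "I \<noteq> {}"
  shows "(first_in (ord []) I, dec [] (first_in (ord []) I)) \<in> set (run ord dec I)"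
proof -
  have "hist ord dec I (Suc 0) = [(first_in (ord []) I, dec [] (first_in (ord []) I))]"
    using assms by (simp add: Let_def)
  moreover have "Suc 0 \<le> card I" using assms by (simp add: Suc_le_eq card_gt_0_iff)
  ultimately show ?thesis unfolding run_def using hist_mono[of "Suc 0" "card I" ord dec I] by auto
qed

lemma alloc_ge: "(x, D) \<in> set (run ord dec I) \<Longrightarrow> D \<subseteq> alloc ord dec I (fst x)"
  unfolding alloc_def by (cases x) auto

lemma OPT_ge:
  assumes vi: "valid_input U I" and fU: "finite U" and fe: "feasible_alloc U I f"
  shows "welfare_of I f \<le> OPT U I"
proof -
  let ?W = "{welfare_of I f | f. feasible_alloc U I f}"
  let ?g = "\<lambda>F. \<Sum>x\<in>I. ext_val (fst x) (snd x) (F x)"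
  have fI: "finite I" using vi by (simp add: valid_input_def)
  have "?W \<subseteq> ?g ` (PiE I (\<lambda>_. Pow U))"
  proof
    fix w assume "w \<in> ?W"
    then obtain f where f: "feasible_alloc U I f" "w = welfare_of I f" by auto
    let ?F = "restrict (\<lambda>x. f (fst x)) I"
    have "?F \<in> PiE I (\<lambda>_. Pow U)" using f(1) by (auto simp: feasible_alloc_def)
    moreover have "w = ?g ?F" using f(2) unfolding welfare_of_def by (auto intro: sum.cong)
    ultimately show "w \<in> ?g ` (PiE I (\<lambda>_. Pow U))" by blast
  qed
  moreover have "finite (?g ` (PiE I (\<lambda>_. Pow U)))"
    using fI fU by (intro finite_imageI finite_PiE) auto
  ultimately have "finite ?W" by (rule finite_subset)
  then show ?thesis unfolding OPT_def using fe by (intro Max_ge) auto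
qed


lemma ext_form:
  assumes "g \<in> U" "{g} \<noteq> U"
  shows "ext_val (0::nat, {{g}, U}) w T =
    (if U \<subseteq> T then max (w {g}) (w U) else if g \<in> T then w {g} else 0)"
proof -
  have gT: "U \<subseteq> T \<Longrightarrow> g \<in> T" using assms by auto
  show ?thesis
  proof (cases "U \<subseteq> T")
    case True
    then have "{S \<in> coll (0::nat, {{g}, U}). S \<subseteq> T} = {{g}, U}" using gT by (auto simp: coll_def)
    then show ?thesis using True by (simp add: ext_val_def max_def)
  next
    case False
    show ?thesis
    proof (cases "g \<in> T")
      case True
      then have "{S \<in> coll (0::nat, {{g}, U}). S \<subseteq> T} = {{g}}" using False by (auto simp: coll_def)
      then show ?thesis using True False by (simp add: ext_val_def)
    next
      case F2: False
      then have "{S \<in> coll (0::nat, {{g}, U}). S \<subseteq> T} = {}" using False by (auto simp: coll_def)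
      then show ?thesis using F2 False by (simp add: ext_val_def)
    qed
  qed
qed

theorem theorem15:
  fixes U :: "'g set" and m :: nat and \<delta> :: real
    and ord :: "'g history \<Rightarrow> ('g item \<times> 'g item) set"
    and dec :: "'g history \<Rightarrow> 'g item \<Rightarrow> 'g set"
  assumes "finite U" and "card U = m" and "m \<ge> 2"
    and "\<delta> > 0"
    and "priority_orders U ord"
    and "mech_feasible U ord dec"
    and "truthful_verif U ord dec"
  shows "approx_ratio U ord dec > ereal ((1 - \<delta>) * real m / 2)"
proof -
  note fU = assms(1) and cU = assms(2) and m2 = assms(3) and po = assms(5)
    and mf = assms(6) and tv = assms(7)
  define B where "B g = ((0::nat), {{g}, U})" for g :: 'g
  define vv where "vv g S = (if S = {g} then 1 else if S = U then 2 else (0::real))" for g :: 'g and S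
  define bb where "bb S = (if S = U then 2 else (0::real))" for S :: "'g set"
  have gU: "{g} \<noteq> U" if "g \<in> U" for g
  proof
    assume "{g} = U" then have "card U = 1" by auto
    then show False using cU m2 by simp
  qed
  have vb: "valid_bidder U (B g)" if "g \<in> U" for g
    using that gU[OF that] by (auto simp: valid_bidder_def B_def coll_def card_insert_if)
  have vvv: "valid_val (B g) (vv g)" for g
    by (auto simp: valid_val_def B_def coll_def vv_def)
  have vbb: "valid_val (B g) bb" for g
    by (auto simp: valid_val_def B_def coll_def bb_def)
  have ext: "ext_val (B g) w T = (if U \<subseteq> T then max (w {g}) (w U) else if g \<in> T then w {g} else 0)"
    if "g \<in> U" for g w T
    unfolding B_def using ext_form[OF that gU[OF that]] .
  have items: "(B g, w) \<in> Items U" if "g \<in> U" "valid_val (B g) w" for g w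
    using that vb by (auto simp: Items_def)
  have allocU: "alloc ord dec I i \<subseteq> U" if "valid_input U I" "x \<in> I" "fst x = i" for I x i
    using mf that by (auto simp: mech_feasible_def feasible_alloc_def)
  have lin: "linear_order_on (Items U) (ord h)" for h using po by (simp add: priority_orders_def)
  have key: "real m / 2 \<le> \<alpha>" if ap: "\<alpha> > 0" "is_approx U ord dec \<alpha>" for \<alpha>
  proof -
    have single_alloc: "alloc ord dec {x} (fst x) = dec [] x" if "x \<in> Items U" for x
    proof -
      have fx: "first_in (ord []) {x} = x" using first_in_mem[OF lin, of "{x}" "[]"] that by auto
      have "run ord dec {x} = [(x, dec [] x)]" by (simp add: run_def Let_def fx)
      then show ?thesis unfolding alloc_def by (cases x) auto
    qed
    have step1: "U \<subseteq> dec [] (B g, vv g)" if gu: "g \<in> U" for g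
    proof -
      let ?Ib = "{(B g, bb)}"
      let ?Ab = "alloc ord dec (insert (B g, bb) {}) (B g)"
      let ?Av = "alloc ord dec (insert (B g, vv g) {}) (B g)"
      have viB: "valid_input U ?Ib" using items[OF gu vbb] by (auto simp: valid_input_def)
      have "feasible_alloc U ?Ib (\<lambda>_. U)" by (auto simp: feasible_alloc_def)
      then have "welfare_of ?Ib (\<lambda>_. U) \<le> OPT U ?Ib" using OPT_ge viB fU by blast
      moreover have "welfare_of ?Ib (\<lambda>_. U) = 2" using ext[OF gu] gu gU[OF gu]
        by (simp add: welfare_of_def bb_def)
      ultimately have "2 / \<alpha> \<le> OPT U ?Ib / \<alpha>" using ap by (simp add: divide_right_mono)
      also have "\<dots> \<le> welfare_of ?Ib (alloc ord dec ?Ib)" using ap viB by (simp add: is_approx_def)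
      also have "\<dots> = ext_val (B g) bb ?Ab" by (simp add: welfare_of_def)
      finally have "0 < ext_val (B g) bb ?Ab" using ap by (smt (verit) divide_pos_pos)
      then have "U \<subseteq> ?Ab" using ext[OF gu] gu gU[OF gu] by (auto simp: bb_def split: if_splits)
      moreover have "?Ab \<subseteq> U" using allocU[OF viB] by auto
      ultimately have Ab: "?Ab = U" by auto
      have "valid_input U {}" by (simp add: valid_input_def)
      then have "ext_val (B g) bb ?Ab \<le> ext_val (B g) (vv g) ?Ab \<longrightarrow>
                 ext_val (B g) (vv g) ?Ab \<le> ext_val (B g) (vv g) ?Av"
        using tv vb[OF gu] vvv vbb unfolding truthful_verif_def Let_def by blast
      moreover have "ext_val (B g) bb ?Ab = 2" "ext_val (B g) (vv g) ?Ab = 2"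
        using Ab ext[OF gu] gU[OF gu] by (auto simp: bb_def vv_def)
      ultimately have "2 \<le> ext_val (B g) (vv g) ?Av" by simp
      then have "U \<subseteq> ?Av" using ext[OF gu] gu gU[OF gu] by (auto simp: vv_def split: if_splits)
      moreover have "?Av = dec [] (B g, vv g)" using single_alloc[OF items[OF gu vvv]] by simp
      ultimately show ?thesis by simp
    qed
    have Binj: "inj_on B U"
    proof
      fix g g' assume "g \<in> U" "g' \<in> U" "B g = B g'"
      then have "{{g}, U} = {{g'}, U}" by (simp add: B_def)
      then have "{g} \<in> {{g'}, U}" by (metis insertI1)
      then have "{g} = {g'} \<or> {g} = U" by simp
      then show "g = g'" using gU[OF \<open>g \<in> U\<close>] by simp
    qed
    define I where "I = (\<lambda>g. (B g, vv g)) ` U"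
    have finI: "finite I" using fU by (simp add: I_def)
    have neI: "I \<noteq> {}" using cU m2 by (auto simp: I_def)
    have viI: "valid_input U I"
      using finI items vvv Binj by (auto simp: valid_input_def I_def inj_on_def)
    have IsubItems: "I \<subseteq> Items U" using viI by (simp add: valid_input_def)
    define x0 where "x0 = first_in (ord []) I"
    have "x0 \<in> I" unfolding x0_def by (rule first_in_mem[OF lin finI neI IsubItems])
    then obtain g0 where g0: "g0 \<in> U" "x0 = (B g0, vv g0)" by (auto simp: I_def)
    have "(x0, dec [] x0) \<in> set (run ord dec I)" unfolding x0_def using first_in_run finI neI by blast
    then have "dec [] x0 \<subseteq> alloc ord dec I (B g0)" using alloc_ge g0 by fastforce
    then have A0: "U \<subseteq> alloc ord dec I (B g0)" using step1[OF g0(1)] g0 by auto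
    have others: "alloc ord dec I (B g) = {}" if "g \<in> U" "g \<noteq> g0" for g
    proof -
      have "B g \<noteq> B g0" using Binj that g0 by (auto simp: inj_on_def)
      then have "alloc ord dec I (B g) \<inter> alloc ord dec I (B g0) = {}"
        using mf viI that g0 unfolding mech_feasible_def feasible_alloc_def I_def
        by (smt (verit, ccfv_threshold) fst_conv image_eqI)
      moreover have "alloc ord dec I (B g) \<subseteq> U" using allocU[OF viI, of "(B g, vv g)"] that by (auto simp: I_def)
      ultimately show ?thesis using A0 by auto
    qed
    have le2: "ext_val (B g) (vv g) T \<le> 2" if "g \<in> U" for g T
      using ext[OF that] by (auto simp: vv_def)
    have "welfare_of I (alloc ord dec I) = (\<Sum>g\<in>U. ext_val (B g) (vv g) (alloc ord dec I (B g)))"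
      unfolding welfare_of_def I_def using Binj by (subst sum.reindex) (auto simp: inj_on_def)
    also have "\<dots> = ext_val (B g0) (vv g0) (alloc ord dec I (B g0))
        + (\<Sum>g\<in>U - {g0}. ext_val (B g) (vv g) (alloc ord dec I (B g)))"
      using fU g0 by (simp add: sum.remove)
    also have "(\<Sum>g\<in>U - {g0}. ext_val (B g) (vv g) (alloc ord dec I (B g))) = 0"
    proof (rule sum.neutral, rule ballI)
      fix g assume "g \<in> U - {g0}"
      then show "ext_val (B g) (vv g) (alloc ord dec I (B g)) = 0" using others ext gU by auto
    qed
    finally have W: "welfare_of I (alloc ord dec I) \<le> 2" using le2[OF g0(1)] by simp
    define f where "f i = {g \<in> U. i = B g}" for i
    have fB: "f (B g) = {g}" if "g \<in> U" for g using that Binj by (auto simp: f_def inj_on_def)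
    have "feasible_alloc U I f"
      unfolding feasible_alloc_def I_def by (auto simp: fB)
    then have "welfare_of I f \<le> OPT U I" using OPT_ge viI fU by blast
    moreover have "welfare_of I f = real m"
    proof -
      have "welfare_of I f = (\<Sum>g\<in>U. ext_val (B g) (vv g) (f (B g)))"
        unfolding welfare_of_def I_def using Binj by (subst sum.reindex) (auto simp: inj_on_def)
      also have "\<dots> = (\<Sum>g\<in>U. 1)"
      proof (rule sum.cong)
        fix g assume gu: "g \<in> U"
        have "\<not> U \<subseteq> {g}" using gU[OF gu] gu by auto
        then show "ext_val (B g) (vv g) (f (B g)) = 1" using ext[OF gu] fB[OF gu] by (simp add: vv_def)
      qed simp
      finally show ?thesis using cU by simp
    qed
    ultimately have "real m / \<alpha> \<le> OPT U I / \<alpha>" using ap by (simp add: divide_right_mono)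
    also have "\<dots> \<le> welfare_of I (alloc ord dec I)" using ap viI by (simp add: is_approx_def)
    finally have "real m / \<alpha> \<le> 2" using W by simp
    then show ?thesis using ap by (simp add: field_simps)
  qed
  have "ereal (real m / 2) \<le> approx_ratio U ord dec"
    unfolding approx_ratio_def
  proof (rule Inf_greatest)
    fix y assume "y \<in> {ereal \<alpha> | \<alpha>. \<alpha> > 0 \<and> is_approx U ord dec \<alpha>}"
    then obtain a where "y = ereal a" "a > 0" "is_approx U ord dec a" by auto
    then show "ereal (real m / 2) \<le> y" using key[of a] by simp
  qed
  moreover have "(1 - \<delta>) * real m / 2 < real m / 2" using assms(4) m2 by (simp add: field_simps)
  moreover have "ereal ((1 - \<delta>) * real m / 2) < ereal (real m / 2)" using calculation(2) by simp
  ultimately show ?thesis by (meson less_le_trans)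
qed

end
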